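(* Let $\mathcal{H}_{1}$, $\mathcal{H}_{2}$ and $\mathcal{G}$ be three pdCGs such that both $\mathcal{H}_{1}$ and $\mathcal{H}_{2}$ are covered by $\mathcal{G}$ in the model inclusion order or, equivalently, such that $\mathcal{P}(\mathcal{H}_{1})$ and $\mathcal{P}(\mathcal{H}_{2})$ are two neighbouring submodels of $\mathcal{P}(\mathcal{G})$. Then $\mathcal{H}_{1}\preceq_{t}\mathcal{H}_{2}$ if and only if, for a given edge $(i,j)\in\mathbb{E}_{\mathcal{G}}$, $\mathcal{H}_{2}=(V, E_{\mathcal{G}}, \mathbb{L}_{\mathcal{G}}, \mathbb{E}_{\mathcal{G}}\setminus \{(i,j)\})$ and $\mathcal{H}_{1}$ is either $(V, E_{\mathcal{G}}\setminus\{(i,j)\}, \mathbb{L}_{\mathcal{G}}, \mathbb{E}_{\mathcal{G}} \setminus \{(i,j)\})$ or $(V, E_{\mathcal{G}}\setminus\{\tau(i,j)\}, \mathbb{L}_{\mathcal{G}}, \mathbb{E}_{\mathcal{G}} \setminus \{(i,j)\})$. Moreover, in the latter case $\mathcal{H}_{1}$ is covered by $\mathcal{H}_{2}$ in the twin order ($\mathcal{H}_{1}\prec_t\mathcal{H}_{2}$ with no $\mathcal F\in\mathcal P$ such that $\mathcal{H}_{1}\prec_t\mathcal F\prec_t\mathcal{H}_{2}$), whereas in all other cases $\mathcal{H}_{1}$ and $\mathcal{H}_{2}$ are $\preceq_{t}$-incomparable.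
   Context: Let $V=\{1,\dots,p\}$ and let $\tau$ be a twin-pairing function on $V$, i.e. $\tau(i)\in V$ with $\tau(\tau(i))=i$ and $\tau(i)\neq i$; it is extended to edges by $\tau(i,j)=(\tau(i),\tau(j))$ (endpoints reordered so the smaller comes first) and to sets elementwise. Fix a partition $(L,R)$ of $V$ with $\tau(L)=R$, numbered so that $L=\{1,\dots,q\}$, $R=\{q+1,\dots,p\}$. Let $F_V=\{(i,j): i,j\in V, i<j\}$, $F_L=\{(i,j)\in F_V: i<\tau(j)\}$, $F_R=\{(i,j)\in F_V: i>\tau(j)\}$. A coloured graph $\mathcal G=(\mathcal V,\mathcal E)$ consists of a partition $\mathcal V$ of $V$ into vertex colour classes and a partition $\mathcal E$ of an edge set $E\subseteq F_V$ into edge colour classes. It is a coloured graph for paired data (pdCG) if every colour class is either atomic (a single element) or twin-pairing (of the form $\{i,\tau(i)\}$ or $\{(i,j),\tau(i,j)\}$ with $(i,j)\neq\tau(i,j)$). The associated RCON model for paired data $\mathcal{P}(\mathcal G)$ is the family of Gaussian distributions whose concentration matrix has zero entries for missing edges and equal entries for vertices or edges in the same colour class; $\mathcal{P}$ denotes the family of all pdCGs on $V$. Every pdCG is equivalently represented by the quadruplet $(V,E,\mathbb L,\mathbb E)$ where $E$ is the union of the edge colour classes, $E_L=E\cap F_L$, $E_R=E\cap F_R$, $\mathbb L=\{i\in L:\{i\}\in\mathcal V\}$ and $\mathbb E=\{(i,j)\in E_L\cap\tau(E_R): \{(i,j)\}\in\mathcal E\}$. The model inclusion order is $\mathcal H\preceq_s\mathcal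 G$ iff $\mathcal P(\mathcal H)\subseteq\mathcal P(\mathcal G)$, which holds iff the edge set of $\mathcal H$ is contained in that of $\mathcal G$ and every vertex (resp. edge) colour class of $\mathcal H$ is a union of vertex (resp. edge) colour classes of $\mathcal G$; $\mathcal H$ is covered by $\mathcal G$ in this order if $\mathcal H\prec_s\mathcal G$ and no $\mathcal F\in\mathcal P$ satisfies $\mathcal H\prec_s\mathcal F\prec_s\mathcal G$. The twin order is $\mathcal H\preceq_t\mathcal G$ iff $E_{\mathcal H}\subseteq E_{\mathcal G}$, $\mathbb L_{\mathcal H}\subseteq\mathbb L_{\mathcal G}$ and $\mathbb E_{\mathcal H}\subseteq\mathbb E_{\mathcal G}$. The graphs covered by $\mathcal G$ in the model inclusion order are exactly: (i) $(V,E_{\mathcal G},\mathbb L_{\mathcal G}\setminus\{i\},\mathbb E_{\mathcal G})$, $i\in\mathbb L_{\mathcal G}$; (ii) $(V,E_{\mathcal G},\mathbb L_{\mathcal G},\mathbb E_{\mathcal G}\setminus\{(i,j)\})$, $(i,j)\in\mathbb E_{\mathcal G}$; (iii) $(V,E_{\mathcal G}\setminus\{(i,j)\},\mathbb L_{\mathcal G},\mathbb E_{\mathcal G}\setminus\{(i,j)\})$, $(i,j)\in\mathbb E_{\mathcal G}$; (iv) $(V,E_{\mathcal G}\setminus\{\tau(i,j)\},\mathbb L_{\mathcal G},\mathbb E_{\mathcal G}\setminus\{(i,j)\})$, $(i,j)\in\mathbb E_{\mathcal G}$; (v) $(V,E_{\mathcal G}\setminus\{(i,j)\},\mathbb L_{\mathcal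 G},\mathbb E_{\mathcal G})$ for $(i,j)\in E_{\mathcal G}$ with $\tau(i,j)\notin E_{\mathcal G}$; (vi) $(V,E_{\mathcal G}\setminus\{(i,\tau(i))\},\mathbb L_{\mathcal G},\mathbb E_{\mathcal G})$ for $(i,\tau(i))\in E_{\mathcal G}$; (vii) $(V,E_{\mathcal G}\setminus\{(i,j),\tau(i,j)\},\mathbb L_{\mathcal G},\mathbb E_{\mathcal G})$ for $(i,j),\tau(i,j)\in E_{\mathcal G}$, $(i,j)\neq\tau(i,j)$, $(i,j),\tau(i,j)\notin\mathbb E_{\mathcal G}$. *)

theory Defs
  imports Main
begin

text \<open>Vertices are natural numbers, V = {1..p}; edges are pairs (i,j) with i < j.
  A coloured graph is a pair (vertex colour classes, edge colour classes).\<close>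

type_synonym edge = "nat \<times> nat"
type_synonym cgraph = "nat set set \<times> edge set set"

definition Vset :: "nat \<Rightarrow> nat set" where
  "Vset p = {1..p}"

definition twin_pairing :: "nat \<Rightarrow> (nat \<Rightarrow> nat) \<Rightarrow> bool" where
  "twin_pairing p \<tau> \<longleftrightarrow> (\<forall>i\<in>Vset p. \<tau> i \<in> Vset p \<and> \<tau> (\<tau> i) = i \<and> \<tau> i \<noteq> i)"

definition tau_e :: "(nat \<Rightarrow> nat) \<Rightarrow> edge \<Rightarrow> edge" where
  "tau_e \<tau> e = (min (\<tau> (fst e)) (\<tau> (snd e)), max (\<tau> (fst e)) (\<tau> (snd e)))"

definition F_V :: "nat \<Rightarrow> edge set" where
  "F_V p = {(i, j). i \<in> Vset p \<and> j \<in> Vset p \<and> i < j}"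

definition F_L :: "nat \<Rightarrow> (nat \<Rightarrow> nat) \<Rightarrow> edge set" where
  "F_L p \<tau> = {(i, j) \<in> F_V p. i < \<tau> j}"

definition F_R :: "nat \<Rightarrow> (nat \<Rightarrow> nat) \<Rightarrow> edge set" where
  "F_R p \<tau> = {(i, j) \<in> F_V p. i > \<tau> j}"

definition is_partition :: "'a set set \<Rightarrow> 'a set \<Rightarrow> bool" where
  "is_partition P A \<longleftrightarrow> {} \<notin> P \<and> \<Union>P = A \<and>
     (\<forall>X\<in>P. \<forall>Y\<in>P. X \<noteq> Y \<longrightarrow> X \<inter> Y = {})"

definition vclasses :: "cgraph \<Rightarrow> nat set set" where
  "vclasses G = fst G"

definition eclasses :: "cgraph \<Rightarrow> edge set set" where
  "eclasses G = snd G"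

definition edges :: "cgraph \<Rightarrow> edge set" where
  "edges G = \<Union>(eclasses G)"

definition coloured_graph :: "nat \<Rightarrow> cgraph \<Rightarrow> bool" where
  "coloured_graph p G \<longleftrightarrow> is_partition (vclasses G) (Vset p) \<and>
     is_partition (eclasses G) (edges G) \<and> edges G \<subseteq> F_V p"

definition pdCG :: "nat \<Rightarrow> (nat \<Rightarrow> nat) \<Rightarrow> cgraph \<Rightarrow> bool" where
  "pdCG p \<tau> G \<longleftrightarrow> coloured_graph p G \<and>
     (\<forall>C\<in>vclasses G. (\<exists>i. C = {i}) \<or> (\<exists>i. C = {i, \<tau> i})) \<and>
     (\<forall>C\<in>eclasses G. (\<exists>e. C = {e}) \<or> (\<exists>e. C = {e, tau_e \<tau> e} \<and> e \<noteq> tau_e \<tau> e))"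

text \<open>Quadruplet representation (V, E, LL, EE); L = {1..q}.\<close>
definition LL :: "nat \<Rightarrow> cgraph \<Rightarrow> nat set" where
  "LL q G = {i \<in> {1..q}. {i} \<in> vclasses G}"

definition EE :: "nat \<Rightarrow> (nat \<Rightarrow> nat) \<Rightarrow> cgraph \<Rightarrow> edge set" where
  "EE p \<tau> G = {e \<in> (edges G \<inter> F_L p \<tau>) \<inter> tau_e \<tau> ` (edges G \<inter> F_R p \<tau>).
                 {e} \<in> eclasses G}"

definition quad :: "nat \<Rightarrow> nat \<Rightarrow> (nat \<Rightarrow> nat) \<Rightarrow> cgraph \<Rightarrow> edge set \<times> nat set \<times> edge set" where
  "quad p q \<tau> G = (edges G, LL q G, EE p \<tau> G)"

text \<open>Model inclusion order (combinatorial characterisation of P(H) \<subseteq> P(G)).\<close>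
definition model_le :: "cgraph \<Rightarrow> cgraph \<Rightarrow> bool" where
  "model_le H G \<longleftrightarrow> edges H \<subseteq> edges G \<and>
     (\<forall>C\<in>vclasses H. \<exists>S\<subseteq>vclasses G. C = \<Union>S) \<and>
     (\<forall>C\<in>eclasses H. \<exists>S\<subseteq>eclasses G. C = \<Union>S)"

definition model_less :: "cgraph \<Rightarrow> cgraph \<Rightarrow> bool" where
  "model_less H G \<longleftrightarrow> model_le H G \<and> H \<noteq> G"

definition covered_s :: "nat \<Rightarrow> (nat \<Rightarrow> nat) \<Rightarrow> cgraph \<Rightarrow> cgraph \<Rightarrow> bool" where
  "covered_s p \<tau> H G \<longleftrightarrow> pdCG p \<tau> H \<and> pdCG p \<tau> G \<and> model_less H G \<and>
     \<not> (\<exists>F. pdCG p \<tau> F \<and> model_less H F \<and> model_less F G)"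

definition twin_le :: "nat \<Rightarrow> nat \<Rightarrow> (nat \<Rightarrow> nat) \<Rightarrow> cgraph \<Rightarrow> cgraph \<Rightarrow> bool" where
  "twin_le p q \<tau> H G \<longleftrightarrow> edges H \<subseteq> edges G \<and> LL q H \<subseteq> LL q G \<and> EE p \<tau> H \<subseteq> EE p \<tau> G"

definition twin_less :: "nat \<Rightarrow> nat \<Rightarrow> (nat \<Rightarrow> nat) \<Rightarrow> cgraph \<Rightarrow> cgraph \<Rightarrow> bool" where
  "twin_less p q \<tau> H G \<longleftrightarrow> twin_le p q \<tau> H G \<and> H \<noteq> G"

definition covered_t :: "nat \<Rightarrow> nat \<Rightarrow> (nat \<Rightarrow> nat) \<Rightarrow> cgraph \<Rightarrow> cgraph \<Rightarrow> bool" where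
  "covered_t p q \<tau> H G \<longleftrightarrow> pdCG p \<tau> H \<and> pdCG p \<tau> G \<and> twin_less p q \<tau> H G \<and>
     \<not> (\<exists>F. pdCG p \<tau> F \<and> twin_less p q \<tau> H F \<and> twin_less p q \<tau> F G)"

definition twin_config :: "nat \<Rightarrow> nat \<Rightarrow> (nat \<Rightarrow> nat) \<Rightarrow> cgraph \<Rightarrow> cgraph \<Rightarrow> cgraph \<Rightarrow> bool" where
  "twin_config p q \<tau> G H1 H2 \<longleftrightarrow> (\<exists>e\<in>EE p \<tau> G.
     quad p q \<tau> H2 = (edges G, LL q G, EE p \<tau> G - {e}) \<and>
     (quad p q \<tau> H1 = (edges G - {e}, LL q G, EE p \<tau> G - {e}) \<or>
      quad p q \<tau> H1 = (edges G - {tau_e \<tau> e}, LL q G, EE p \<tau> G - {e})))"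

end

theory Submission
  imports Defs
begin


definition pform :: "('a \<Rightarrow> 'a) \<Rightarrow> 'a set set \<Rightarrow> bool" where
  "pform \<sigma> P \<longleftrightarrow> (\<forall>C\<in>P. (\<exists>x. C = {x}) \<or> (\<exists>x. C = {x, \<sigma> x} \<and> x \<noteq> \<sigma> x))"
definition sg :: "'a set set \<Rightarrow> 'a set" where "sg P = {x. {x} \<in> P}"
definition mkp :: "('a \<Rightarrow> 'a) \<Rightarrow> 'a set \<Rightarrow> 'a set \<Rightarrow> 'a set set" where
  "mkp \<sigma> S X = (\<lambda>x. {x}) ` S \<union> (\<lambda>x. {x, \<sigma> x}) ` (X - S)"
definition invon :: "('a \<Rightarrow> 'a) \<Rightarrow> 'a set \<Rightarrow> bool" where
  "invon \<sigma> Y \<longleftrightarrow> (\<forall>y\<in>Y. \<sigma> y \<in> Y \<and> \<sigma> (\<sigma> y) = y)"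
definition okS :: "('a \<Rightarrow> 'a) \<Rightarrow> 'a set \<Rightarrow> 'a set \<Rightarrow> bool" where
  "okS \<sigma> S X \<longleftrightarrow> S \<subseteq> X \<and> (\<forall>x\<in>S. \<sigma> x \<in> X \<longrightarrow> \<sigma> x \<in> S) \<and> (\<forall>x\<in>X. (\<sigma> x = x \<or> \<sigma> x \<notin> X) \<longrightarrow> x \<in> S)"

lemma part_mem: "is_partition P X \<Longrightarrow> C \<in> P \<Longrightarrow> C \<subseteq> X"
  by (auto simp: is_partition_def)
lemma part_ex: "is_partition P X \<Longrightarrow> x \<in> X \<Longrightarrow> \<exists>C\<in>P. x \<in> C"
  by (auto simp: is_partition_def)
lemma part_uniq: "is_partition P X \<Longrightarrow> C \<in> P \<Longrightarrow> D \<in> P \<Longrightarrow> x \<in> C \<Longrightarrow> x \<in> D \<Longrightarrow> C = D"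
  unfolding is_partition_def by blast

lemma pform_cases:
  assumes "pform \<sigma> P" "C \<in> P"
  obtains x where "C = {x}" | x where "C = {x, \<sigma> x}" "x \<noteq> \<sigma> x"
  using assms unfolding pform_def by blast

lemma gen1:
  assumes P: "is_partition P X" and F: "pform \<sigma> P" and XY: "X \<subseteq> Y" and I: "invon \<sigma> Y"
  shows "okS \<sigma> (sg P) X" and "P = mkp \<sigma> (sg P) X"
proof -
  have inv: "\<And>y. y \<in> X \<Longrightarrow> \<sigma> (\<sigma> y) = y" using I XY unfolding invon_def by blast
  have sX: "sg P \<subseteq> X" using part_mem[OF P] by (auto simp: sg_def)
  have c1: "\<sigma> x \<in> sg P" if x: "x \<in> sg P" "\<sigma> x \<in> X" for x
  proof -
    obtain C where C: "C \<in> P" "\<sigma> x \<in> C" using part_ex[OF P x(2)] by blast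
    show ?thesis
    proof (cases rule: pform_cases[OF F C(1)])
      case (1 y)
      then show ?thesis using C by (simp add: sg_def)
    next
      case (2 y)
      have xP: "{x} \<in> P" using x by (simp add: sg_def)
      have yX: "y \<in> X" using part_mem[OF P C(1)] 2 by auto
      have "x \<in> C"
      proof (cases "\<sigma> x = y")
        case True
        then have "x = \<sigma> y" using inv x(1) sX by (metis subsetD)
        then show ?thesis using 2 by simp
      next
        case False
        then have "\<sigma> x = \<sigma> y" using C 2 by auto
        then have "x = y" using inv x(1) sX yX by (metis subsetD)
        then show ?thesis using 2 by simp
      qed
      then have "C = {x}" using part_uniq[OF P C(1) xP] by simp
      then show ?thesis using C by (simp add: sg_def)
    qed
  qed
  have c2: "x \<in> sg P" if x: "x \<in> X" "\<sigma> x = x \<or> \<sigma> x \<notin> X" for x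
  proof -
    obtain C where C: "C \<in> P" "x \<in> C" using part_ex[OF P x(1)] by blast
    show ?thesis
    proof (cases rule: pform_cases[OF F C(1)])
      case (1 y)
      then show ?thesis using C by (simp add: sg_def)
    next
      case (2 y)
      have yX: "y \<in> X" "\<sigma> y \<in> X" using part_mem[OF P C(1)] 2 by auto
      have "x = y \<or> x = \<sigma> y" using C 2 by auto
      then show ?thesis
      proof
        assume "x = y" then show ?thesis using x yX 2 by auto
      next
        assume "x = \<sigma> y"
        then have "\<sigma> x = y" using inv yX by simp
        then show ?thesis using x yX 2 \<open>x = \<sigma> y\<close> by auto
      qed
    qed
  qed
  show "okS \<sigma> (sg P) X" using sX c1 c2 unfolding okS_def by blast
  show "P = mkp \<sigma> (sg P) X"
  proof
    show "P \<subseteq> mkp \<sigma> (sg P) X"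
    proof
      fix C assume C: "C \<in> P"
      show "C \<in> mkp \<sigma> (sg P) X"
      proof (cases rule: pform_cases[OF F C])
        case (1 y)
        then show ?thesis using C by (auto simp: sg_def mkp_def)
      next
        case (2 y)
        have yX: "y \<in> X" using part_mem[OF P C] 2 by auto
        have "y \<notin> sg P"
        proof
          assume "y \<in> sg P"
          then have "{y} \<in> P" by (simp add: sg_def)
          then have "{y} = C" using part_uniq[OF P _ C, of "{y}" y] 2 by simp
          then show False using 2 by auto
        qed
        then show ?thesis using yX 2 by (auto simp: mkp_def)
      qed
    qed
  next
    show "mkp \<sigma> (sg P) X \<subseteq> P"
    proof
      fix C assume "C \<in> mkp \<sigma> (sg P) X"
      then consider (s) x where "x \<in> sg P" "C = {x}" | (d) x where "x \<in> X" "x \<notin> sg P" "C = {x, \<sigma> x}"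
        unfolding mkp_def by blast
      then show "C \<in> P"
      proof cases
        case s then show ?thesis by (simp add: sg_def)
      next
        case (d x)
        obtain D where D: "D \<in> P" "x \<in> D" using part_ex[OF P d(1)] by blast
        show ?thesis
        proof (cases rule: pform_cases[OF F D(1)])
          case (1 y)
          then show ?thesis using D d by (simp add: sg_def)
        next
          case (2 y)
          have yX: "y \<in> X" "\<sigma> y \<in> X" using part_mem[OF P D(1)] 2 by auto
          have "x = y \<or> x = \<sigma> y" using D 2 by auto
          then have "D = C"
          proof
            assume "x = y" then show ?thesis using d 2 by simp
          next
            assume "x = \<sigma> y"
            then have "\<sigma> x = y" using inv yX by simp
            then show ?thesis using d 2 \<open>x = \<sigma> y\<close> by auto
          qed
          then show ?thesis using D by simp
        qed
      qed
    qed
  qed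
qed


lemma gen2:
  assumes S: "okS \<sigma> S X" and XY: "X \<subseteq> Y" and I: "invon \<sigma> Y"
  shows "is_partition (mkp \<sigma> S X) X" and "pform \<sigma> (mkp \<sigma> S X)" and "sg (mkp \<sigma> S X) = S"
proof -
  have inv: "\<And>y. y \<in> X \<Longrightarrow> \<sigma> (\<sigma> y) = y" using I XY unfolding invon_def by blast
  have SX: "S \<subseteq> X" and c1: "\<And>x. x \<in> S \<Longrightarrow> \<sigma> x \<in> X \<Longrightarrow> \<sigma> x \<in> S"
    and c2: "\<And>x. x \<in> X \<Longrightarrow> x \<notin> S \<Longrightarrow> \<sigma> x \<noteq> x \<and> \<sigma> x \<in> X"
    using S unfolding okS_def by blast+
  have U: "\<Union>(mkp \<sigma> S X) = X"
  proof
    show "\<Union>(mkp \<sigma> S X) \<subseteq> X" using SX c2 by (auto simp: mkp_def)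
    show "X \<subseteq> \<Union>(mkp \<sigma> S X)"
    proof
      fix x assume "x \<in> X"
      then show "x \<in> \<Union>(mkp \<sigma> S X)"
        by (cases "x \<in> S") (auto simp: mkp_def)
    qed
  qed
  have D: "C \<inter> D = {}" if C: "C \<in> mkp \<sigma> S X" and D: "D \<in> mkp \<sigma> S X" and ne: "C \<noteq> D" for C D
  proof (rule ccontr)
    assume "C \<inter> D \<noteq> {}"
    then obtain z where z: "z \<in> C" "z \<in> D" by blast
    have sing: "\<And>x y. x \<in> S \<Longrightarrow> y \<in> X \<Longrightarrow> y \<notin> S \<Longrightarrow> x \<in> {y, \<sigma> y} \<Longrightarrow> False"
    proof -
      fix x y assume a: "x \<in> S" "y \<in> X" "y \<notin> S" "x \<in> {y, \<sigma> y}"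
      then have "x = \<sigma> y" by auto
      then have "\<sigma> x = y" using inv a(2) by simp
      then show False using c1[OF a(1)] a by auto
    qed
    have pair: "\<And>x y. x \<in> X \<Longrightarrow> y \<in> X \<Longrightarrow> z \<in> {x, \<sigma> x} \<Longrightarrow> z \<in> {y, \<sigma> y} \<Longrightarrow> {x, \<sigma> x} = {y, \<sigma> y}"
    proof -
      fix x y assume a: "x \<in> X" "y \<in> X" "z \<in> {x, \<sigma> x}" "z \<in> {y, \<sigma> y}"
      have ix: "\<sigma> (\<sigma> x) = x" "\<sigma> (\<sigma> y) = y" using inv a by auto
      from a(3,4) consider "z = x" "z = y" | "z = x" "z = \<sigma> y" | "z = \<sigma> x" "z = y" | "z = \<sigma> x" "z = \<sigma> y" by blast
      then show "{x, \<sigma> x} = {y, \<sigma> y}"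
      proof cases
        case 4 then have "\<sigma> (\<sigma> x) = \<sigma> (\<sigma> y)" by simp
        then show ?thesis using ix by simp
      qed (use ix in auto)
    qed
    from C consider (a) x where "x \<in> S" "C = {x}" | (b) x where "x \<in> X" "x \<notin> S" "C = {x, \<sigma> x}"
      unfolding mkp_def by blast
    then show False
    proof cases
      case (a x)
      from D consider (a') y where "y \<in> S" "D = {y}" | (b') y where "y \<in> X" "y \<notin> S" "D = {y, \<sigma> y}"
        unfolding mkp_def by blast
      then show False
      proof cases
        case (a' y) then show False using a z ne by simp
      next
        case (b' y) then show False using a z sing[of x y] by simp
      qed
    next
      case (b x)
      from D consider (a') y where "y \<in> S" "D = {y}" | (b') y where "y \<in> X" "y \<notin> S" "D = {y, \<sigma> y}"
        unfolding mkp_def by blast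
      then show False
      proof cases
        case (a' y) then show False using b z sing[of y x] by simp
      next
        case (b' y) then show False using b z ne pair[of x y] by simp
      qed
    qed
  qed
  show "is_partition (mkp \<sigma> S X) X" unfolding is_partition_def using U D by (auto simp: mkp_def)
  show "pform \<sigma> (mkp \<sigma> S X)" unfolding pform_def mkp_def using c2 by blast
  show "sg (mkp \<sigma> S X) = S"
  proof
    show "S \<subseteq> sg (mkp \<sigma> S X)" by (auto simp: sg_def mkp_def)
    show "sg (mkp \<sigma> S X) \<subseteq> S"
    proof
      fix x assume "x \<in> sg (mkp \<sigma> S X)"
      then have "{x} \<in> mkp \<sigma> S X" by (simp add: sg_def)
      then consider "x \<in> S" | y where "y \<in> X" "y \<notin> S" "{x} = {y, \<sigma> y}" unfolding mkp_def by blast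
      then show "x \<in> S"
      proof cases
        case (2 y)
        then have "y \<in> {x}" "\<sigma> y \<in> {x}" by (metis insertI1, metis insertI1 insert_commute)
        then have "\<sigma> y = y" by simp
        then show ?thesis using c2 2 by blast
      qed
    qed
  qed
qed

lemma gen3:
  assumes SH: "okS \<sigma> SH XH" and SG: "okS \<sigma> SG XG" and XY: "XH \<subseteq> XG" "XG \<subseteq> Y" and I: "invon \<sigma> Y"
  shows "(\<forall>C\<in>mkp \<sigma> SH XH. \<exists>T\<subseteq>mkp \<sigma> SG XG. C = \<Union>T) \<longleftrightarrow> SH \<subseteq> SG"
proof
  have pG: "is_partition (mkp \<sigma> SG XG) XG" using gen2[OF SG XY(2) I] by simp
  assume A: "\<forall>C\<in>mkp \<sigma> SH XH. \<exists>T\<subseteq>mkp \<sigma> SG XG. C = \<Union>T"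
  show "SH \<subseteq> SG"
  proof
    fix x assume x: "x \<in> SH"
    then have "{x} \<in> mkp \<sigma> SH XH" by (simp add: mkp_def)
    then have "\<exists>T\<subseteq>mkp \<sigma> SG XG. {x} = \<Union>T" using A by (rule bspec[rotated])
    then obtain T where T: "T \<subseteq> mkp \<sigma> SG XG" "{x} = \<Union>T" by blast
    have "x \<in> \<Union>T" using T(2) by (metis insertI1)
    then obtain D where D: "D \<in> T" "x \<in> D" by (rule UnionE)
    have "D \<subseteq> \<Union>T" using D(1) by (rule Union_upper)
    then have "D \<subseteq> {x}" using T(2) by simp
    then have "D = {x}" using D(2) by blast
    moreover have "D \<in> mkp \<sigma> SG XG" using D(1) T(1) by (rule subsetD[rotated])
    ultimately have "{x} \<in> mkp \<sigma> SG XG" by simp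
    then have "x \<in> sg (mkp \<sigma> SG XG)" by (simp add: sg_def)
    then show "x \<in> SG" using gen2(3)[OF SG XY(2) I] by simp
  qed
next
  assume sub: "SH \<subseteq> SG"
  have inv: "\<And>y. y \<in> XG \<Longrightarrow> \<sigma> (\<sigma> y) = y" using I XY unfolding invon_def by blast
  have cH: "\<And>x. x \<in> XH \<Longrightarrow> x \<notin> SH \<Longrightarrow> \<sigma> x \<noteq> x \<and> \<sigma> x \<in> XH" using SH unfolding okS_def by blast
  have cG: "\<And>x. x \<in> SG \<Longrightarrow> \<sigma> x \<in> XG \<Longrightarrow> \<sigma> x \<in> SG" using SG unfolding okS_def by blast
  show "\<forall>C\<in>mkp \<sigma> SH XH. \<exists>T\<subseteq>mkp \<sigma> SG XG. C = \<Union>T"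
  proof
    fix C assume "C \<in> mkp \<sigma> SH XH"
    then consider (s) x where "x \<in> SH" "C = {x}" | (d) x where "x \<in> XH" "x \<notin> SH" "C = {x, \<sigma> x}"
      unfolding mkp_def by blast
    then show "\<exists>T\<subseteq>mkp \<sigma> SG XG. C = \<Union>T"
    proof cases
      case (s x)
      have "{x} \<in> mkp \<sigma> SG XG" using s sub unfolding mkp_def by blast
      then show ?thesis using s by (intro exI[of _ "{{x}}"]) simp
    next
      case (d x)
      have xs: "x \<in> XG" "\<sigma> x \<in> XG" "\<sigma> (\<sigma> x) = x" using cH[OF d(1,2)] d XY inv by auto
      show ?thesis
      proof (cases "x \<in> SG")
        case True
        then have "\<sigma> x \<in> SG" using cG xs by blast
        have "{x} \<in> mkp \<sigma> SG XG" "{\<sigma> x} \<in> mkp \<sigma> SG XG" using True \<open>\<sigma> x \<in> SG\<close> unfolding mkp_def by blast+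
        then show ?thesis using d by (intro exI[of _ "{{x}, {\<sigma> x}}"]) auto
      next
        case False
        have "{x, \<sigma> x} \<in> mkp \<sigma> SG XG" using False xs unfolding mkp_def by blast
        then show ?thesis using d by (intro exI[of _ "{{x, \<sigma> x}}"]) auto
      qed
    qed
  qed
qed



locale pd =
  fixes p q :: nat and \<tau> :: "nat \<Rightarrow> nat"
  assumes tp: "twin_pairing p \<tau>"
    and LR: "\<tau> ` {1..q} = {q+1..p}"
begin

lemma tV: "i \<in> Vset p \<Longrightarrow> \<tau> i \<in> Vset p" using tp by (auto simp: twin_pairing_def)
lemma tt: "i \<in> Vset p \<Longrightarrow> \<tau> (\<tau> i) = i" using tp by (auto simp: twin_pairing_def)
lemma tne: "i \<in> Vset p \<Longrightarrow> \<tau> i \<noteq> i" using tp by (auto simp: twin_pairing_def)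
lemma tinj: "i \<in> Vset p \<Longrightarrow> j \<in> Vset p \<Longrightarrow> \<tau> i = \<tau> j \<Longrightarrow> i = j" by (metis tt)

lemma LRa: "i \<in> Vset p \<Longrightarrow> i \<le> q \<Longrightarrow> q < \<tau> i"
proof -
  assume "i \<in> Vset p" "i \<le> q"
  then have "i \<in> {1..q}" by (simp add: Vset_def)
  then have "\<tau> i \<in> \<tau> ` {1..q}" by (rule imageI)
  then have "\<tau> i \<in> {q+1..p}" using LR by simp
  then show ?thesis by simp
qed

lemma LRb: "i \<in> Vset p \<Longrightarrow> q < i \<Longrightarrow> \<tau> i \<le> q"
proof -
  assume a: "i \<in> Vset p" "q < i"
  then have "i \<in> {q+1..p}" by (simp add: Vset_def)
  then have "i \<in> \<tau> ` {1..q}" using LR by simp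
  then obtain m where m: "m \<in> {1..q}" "i = \<tau> m" by (rule imageE)
  have "m \<in> Vset p" using m a by (simp add: Vset_def)
  then have "\<tau> i = m" using m tt by simp
  then show ?thesis using m by simp
qed

lemma te_lt: "\<tau> i < \<tau> j \<Longrightarrow> tau_e \<tau> (i,j) = (\<tau> i, \<tau> j)" by (simp add: tau_e_def)
lemma te_gt: "\<tau> j < \<tau> i \<Longrightarrow> tau_e \<tau> (i,j) = (\<tau> j, \<tau> i)" by (simp add: tau_e_def)

lemma te_FV: "e \<in> F_V p \<Longrightarrow> tau_e \<tau> e \<in> F_V p"
proof -
  assume "e \<in> F_V p"
  then obtain i j where e: "e = (i,j)" "i \<in> Vset p" "j \<in> Vset p" "i < j" by (auto simp: F_V_def)
  have ne: "\<tau> i \<noteq> \<tau> j"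
  proof
    assume "\<tau> i = \<tau> j"
    then have "i = j" using tinj e(2,3) by blast
    then show False using e(4) by simp
  qed
  have v: "\<tau> i \<in> Vset p" "\<tau> j \<in> Vset p" using e tV by auto
  show ?thesis
  proof (cases "\<tau> i < \<tau> j")
    case True
    then show ?thesis using te_lt[OF True] e(1) v by (simp add: F_V_def)
  next
    case False
    then have lt: "\<tau> j < \<tau> i" using ne by simp
    then show ?thesis using te_gt[OF lt] e(1) v by (simp add: F_V_def)
  qed
qed

lemma te_inv: "e \<in> F_V p \<Longrightarrow> tau_e \<tau> (tau_e \<tau> e) = e"
proof -
  assume "e \<in> F_V p"
  then obtain i j where e: "e = (i,j)" "i \<in> Vset p" "j \<in> Vset p" "i < j" by (auto simp: F_V_def)
  have ne: "\<tau> i \<noteq> \<tau> j"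
  proof
    assume "\<tau> i = \<tau> j"
    then have "i = j" using tinj e(2,3) by blast
    then show False using e(4) by simp
  qed
  have v: "\<tau> (\<tau> i) = i" "\<tau> (\<tau> j) = j" using e tt by auto
  show ?thesis
  proof (cases "\<tau> i < \<tau> j")
    case True
    then show ?thesis using te_lt[OF True] te_lt[of "\<tau> i" "\<tau> j"] e v by simp
  next
    case False
    then have lt: "\<tau> j < \<tau> i" using ne by simp
    have "\<tau> (\<tau> i) < \<tau> (\<tau> j)" using v e(4) by simp
    then have "tau_e \<tau> (\<tau> j, \<tau> i) = (\<tau> (\<tau> i), \<tau> (\<tau> j))" by (rule te_gt)
    then show ?thesis using te_gt[OF lt] e v by simp
  qed
qed

lemma FL_FR: "e \<in> F_L p \<tau> \<Longrightarrow> tau_e \<tau> e \<in> F_R p \<tau>"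
proof -
  assume a: "e \<in> F_L p \<tau>"
  then obtain i j where e: "e = (i,j)" "i \<in> Vset p" "j \<in> Vset p" "i < j" "i < \<tau> j"
    by (auto simp: F_L_def F_V_def)
  have ti: "\<tau> (\<tau> i) = i" "\<tau> (\<tau> j) = j" using e tt by auto
  have ne: "\<tau> i \<noteq> \<tau> j"
  proof
    assume "\<tau> i = \<tau> j"
    then have "i = j" using tinj e(2,3) by blast
    then show False using e(4) by simp
  qed
  have "tau_e \<tau> e \<in> F_V p" using a te_FV by (auto simp: F_L_def)
  moreover have "fst (tau_e \<tau> e) > \<tau> (snd (tau_e \<tau> e))"
  proof (cases "i \<le> q")
    case True
    then have qi: "q < \<tau> i" using LRa e by auto
    show ?thesis
    proof (cases "j \<le> q")
      case True
      then have "q < \<tau> j" using LRa e by auto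
      show ?thesis
      proof (cases "\<tau> i < \<tau> j")
        case True
        then show ?thesis using te_lt[OF True] e(1) ti \<open>q < \<tau> i\<close> \<open>j \<le> q\<close> by simp
      next
        case False
        then have lt: "\<tau> j < \<tau> i" using ne by simp
        then show ?thesis using te_gt[OF lt] e(1) ti \<open>q < \<tau> j\<close> \<open>i \<le> q\<close> by simp
      qed
    next
      case False
      then have "\<tau> j \<le> q" using LRb e by auto
      then have lt: "\<tau> j < \<tau> i" using qi by simp
      then show ?thesis using te_gt[OF lt] e ti by simp
    qed
  next
    case False
    then have "q < j" using e by auto
    then have "\<tau> j \<le> q" using LRb e by auto
    then have False using False e by linarith
    then show ?thesis ..
  qed
  ultimately show ?thesis by (auto simp: F_R_def)
qed

lemma FR_FL: "e \<in> F_R p \<tau> \<Longrightarrow> tau_e \<tau> e \<in> F_L p \<tau>"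
proof -
  assume a: "e \<in> F_R p \<tau>"
  then obtain i j where e: "e = (i,j)" "i \<in> Vset p" "j \<in> Vset p" "i < j" "i > \<tau> j"
    by (auto simp: F_R_def F_V_def)
  have ti: "\<tau> (\<tau> i) = i" "\<tau> (\<tau> j) = j" using e tt by auto
  have ne: "\<tau> i \<noteq> \<tau> j"
  proof
    assume "\<tau> i = \<tau> j"
    then have "i = j" using tinj e(2,3) by blast
    then show False using e(4) by simp
  qed
  have "tau_e \<tau> e \<in> F_V p" using a te_FV by (auto simp: F_R_def)
  moreover have "fst (tau_e \<tau> e) < \<tau> (snd (tau_e \<tau> e))"
  proof (cases "j \<le> q")
    case True
    then have "q < \<tau> j" using LRa e by auto
    then have False using True e by linarith
    then show ?thesis ..
  next
    case False
    then have tj: "\<tau> j \<le> q" using LRb e by auto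
    show ?thesis
    proof (cases "i \<le> q")
      case True
      then have "q < \<tau> i" using LRa e by auto
      then have lt: "\<tau> j < \<tau> i" using tj by simp
      then show ?thesis using te_gt[OF lt] e ti by simp
    next
      case False
      then have "\<tau> i \<le> q" using LRb e by auto
      show ?thesis
      proof (cases "\<tau> i < \<tau> j")
        case True
        then show ?thesis using te_lt[OF True] e(1) ti \<open>\<not> j \<le> q\<close> tj by simp
      next
        case False
        then have lt: "\<tau> j < \<tau> i" using ne by simp
        then show ?thesis using te_gt[OF lt] e(1) ti \<open>\<not> i \<le> q\<close> tj by simp
      qed
    qed
  qed
  ultimately show ?thesis by (auto simp: F_L_def)
qed

lemma FLR_disj: "e \<in> F_L p \<tau> \<Longrightarrow> e \<notin> F_R p \<tau>" by (auto simp: F_L_def F_R_def)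

lemma FL_or: "e \<in> F_V p \<Longrightarrow> tau_e \<tau> e \<noteq> e \<Longrightarrow> e \<in> F_L p \<tau> \<or> tau_e \<tau> e \<in> F_L p \<tau>"
proof -
  assume a: "e \<in> F_V p" "tau_e \<tau> e \<noteq> e"
  then obtain i j where e: "e = (i,j)" "i \<in> Vset p" "j \<in> Vset p" "i < j" by (auto simp: F_V_def)
  have "i \<noteq> \<tau> j"
  proof
    assume "i = \<tau> j"
    then have "\<tau> i = j" using tt e by auto
    then show False using a e \<open>i = \<tau> j\<close> by (auto simp: tau_e_def min_def max_def)
  qed
  then have "e \<in> F_L p \<tau> \<or> e \<in> F_R p \<tau>" using e by (auto simp: F_L_def F_R_def F_V_def)
  then show ?thesis using FR_FL by blast
qed

lemma FL_ne: "e \<in> F_L p \<tau> \<Longrightarrow> tau_e \<tau> e \<noteq> e" using FL_FR FLR_disj by metis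

end


definition Sv :: "cgraph \<Rightarrow> nat set" where "Sv G = sg (vclasses G)"
definition Se :: "cgraph \<Rightarrow> edge set" where "Se G = sg (eclasses G)"
definition mkG :: "nat \<Rightarrow> (nat \<Rightarrow> nat) \<Rightarrow> nat set \<Rightarrow> edge set \<Rightarrow> edge set \<Rightarrow> cgraph" where
  "mkG p \<tau> A E S = (mkp \<tau> A (Vset p), mkp (tau_e \<tau>) S E)"
definition valid :: "nat \<Rightarrow> (nat \<Rightarrow> nat) \<Rightarrow> nat set \<Rightarrow> edge set \<Rightarrow> edge set \<Rightarrow> bool" where
  "valid p \<tau> A E S \<longleftrightarrow> okS \<tau> A (Vset p) \<and> E \<subseteq> F_V p \<and> okS (tau_e \<tau>) S E"

context pd begin

lemma invV: "invon \<tau> (Vset p)" using tV tt by (simp add: invon_def)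
lemma invE: "invon (tau_e \<tau>) (F_V p)" using te_FV te_inv by (simp add: invon_def)

lemma pd_parts:
  assumes "pdCG p \<tau> G"
  shows "is_partition (vclasses G) (Vset p)" "is_partition (eclasses G) (edges G)"
    "edges G \<subseteq> F_V p" "pform \<tau> (vclasses G)" "pform (tau_e \<tau>) (eclasses G)"
proof -
  show pv: "is_partition (vclasses G) (Vset p)" "is_partition (eclasses G) (edges G)" "edges G \<subseteq> F_V p"
    using assms by (auto simp: pdCG_def coloured_graph_def)
  show "pform (tau_e \<tau>) (eclasses G)" using assms by (auto simp: pdCG_def pform_def)
  show "pform \<tau> (vclasses G)" unfolding pform_def
  proof
    fix C assume C: "C \<in> vclasses G"
    then have "(\<exists>i. C = {i}) \<or> (\<exists>i. C = {i, \<tau> i})" using assms by (auto simp: pdCG_def)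
    moreover have "C \<subseteq> Vset p" using part_mem[OF pv(1) C] .
    ultimately show "(\<exists>x. C = {x}) \<or> (\<exists>x. C = {x, \<tau> x} \<and> x \<noteq> \<tau> x)" using tne by blast
  qed
qed

lemma L1:
  assumes "pdCG p \<tau> G"
  shows "valid p \<tau> (Sv G) (edges G) (Se G)" and "G = mkG p \<tau> (Sv G) (edges G) (Se G)"
proof -
  note P = pd_parts[OF assms]
  have v1: "okS \<tau> (Sv G) (Vset p)" "vclasses G = mkp \<tau> (Sv G) (Vset p)"
    using gen1[OF P(1) P(4) order_refl invV] unfolding Sv_def by auto
  have v2: "okS (tau_e \<tau>) (Se G) (edges G)" "eclasses G = mkp (tau_e \<tau>) (Se G) (edges G)"
    using gen1[OF P(2) P(5) P(3) invE] unfolding Se_def by auto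
  show "valid p \<tau> (Sv G) (edges G) (Se G)" using v1 v2 P(3) by (simp add: valid_def)
  show "G = mkG p \<tau> (Sv G) (edges G) (Se G)"
    using v1(2) v2(2) unfolding mkG_def vclasses_def eclasses_def by (metis prod.collapse)
qed

lemma L3:
  assumes "valid p \<tau> A E S"
  shows "pdCG p \<tau> (mkG p \<tau> A E S)" "Sv (mkG p \<tau> A E S) = A" "edges (mkG p \<tau> A E S) = E"
    "Se (mkG p \<tau> A E S) = S"
proof -
  have a: "okS \<tau> A (Vset p)" "E \<subseteq> F_V p" "okS (tau_e \<tau>) S E" using assms by (auto simp: valid_def)
  note g1 = gen2[OF a(1) order_refl invV]
  note g2 = gen2[OF a(3) a(2) invE]
  have vc: "vclasses (mkG p \<tau> A E S) = mkp \<tau> A (Vset p)" by (simp add: mkG_def vclasses_def)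
  have ec: "eclasses (mkG p \<tau> A E S) = mkp (tau_e \<tau>) S E" by (simp add: mkG_def eclasses_def)
  show ed: "edges (mkG p \<tau> A E S) = E" using g2(1) by (simp add: edges_def ec is_partition_def)
  show "Sv (mkG p \<tau> A E S) = A" using g1(3) by (simp add: Sv_def vc)
  show "Se (mkG p \<tau> A E S) = S" using g2(3) by (simp add: Se_def ec)
  show "pdCG p \<tau> (mkG p \<tau> A E S)"
    unfolding pdCG_def coloured_graph_def
    using g1(1,2) g2(1,2) a(2) unfolding vc ec ed pform_def by blast
qed

lemma L4:
  assumes H: "pdCG p \<tau> H" and G: "pdCG p \<tau> G"
  shows "model_le H G \<longleftrightarrow> Sv H \<subseteq> Sv G \<and> edges H \<subseteq> edges G \<and> Se H \<subseteq> Se G"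
proof -
  note h = L1[OF H] and g = L1[OF G]
  have hv: "okS \<tau> (Sv H) (Vset p)" "edges H \<subseteq> F_V p" "okS (tau_e \<tau>) (Se H) (edges H)" using h(1) by (auto simp: valid_def)
  have gv: "okS \<tau> (Sv G) (Vset p)" "edges G \<subseteq> F_V p" "okS (tau_e \<tau>) (Se G) (edges G)" using g(1) by (auto simp: valid_def)
  have vH: "vclasses H = mkp \<tau> (Sv H) (Vset p)" "eclasses H = mkp (tau_e \<tau>) (Se H) (edges H)"
    using h(2) by (metis mkG_def vclasses_def eclasses_def fst_conv snd_conv)+
  have vG: "vclasses G = mkp \<tau> (Sv G) (Vset p)" "eclasses G = mkp (tau_e \<tau>) (Se G) (edges G)"
    using g(2) by (metis mkG_def vclasses_def eclasses_def fst_conv snd_conv)+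
  have V: "(\<forall>C\<in>vclasses H. \<exists>T\<subseteq>vclasses G. C = \<Union>T) \<longleftrightarrow> Sv H \<subseteq> Sv G"
    unfolding vH vG by (rule gen3[OF hv(1) gv(1) order_refl order_refl invV])
  show ?thesis
  proof
    assume m: "model_le H G"
    then have e: "edges H \<subseteq> edges G" by (simp add: model_le_def)
    have "(\<forall>C\<in>eclasses H. \<exists>T\<subseteq>eclasses G. C = \<Union>T) \<longleftrightarrow> Se H \<subseteq> Se G"
      unfolding vH vG by (rule gen3[OF hv(3) gv(3) e gv(2) invE])
    then show "Sv H \<subseteq> Sv G \<and> edges H \<subseteq> edges G \<and> Se H \<subseteq> Se G" using m V e by (simp add: model_le_def)
  next
    assume m: "Sv H \<subseteq> Sv G \<and> edges H \<subseteq> edges G \<and> Se H \<subseteq> Se G"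
    then have e: "edges H \<subseteq> edges G" by simp
    have "(\<forall>C\<in>eclasses H. \<exists>T\<subseteq>eclasses G. C = \<Union>T) \<longleftrightarrow> Se H \<subseteq> Se G"
      unfolding vH vG by (rule gen3[OF hv(3) gv(3) e gv(2) invE])
    then show "model_le H G" using m V e by (simp add: model_le_def)
  qed
qed

lemma triple_eq:
  assumes "pdCG p \<tau> H" "pdCG p \<tau> G" "Sv H = Sv G" "edges H = edges G" "Se H = Se G"
  shows "H = G"
  using L1(2)[OF assms(1)] L1(2)[OF assms(2)] assms(3-5) by metis

end


definition EEt :: "nat \<Rightarrow> (nat \<Rightarrow> nat) \<Rightarrow> edge set \<Rightarrow> edge set \<Rightarrow> edge set" where
  "EEt p \<tau> E S = {e \<in> E \<inter> F_L p \<tau>. tau_e \<tau> e \<in> E \<and> e \<in> S}"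

context pd begin

lemma vSv: "pdCG p \<tau> G \<Longrightarrow> okS \<tau> (Sv G) (Vset p)" using L1(1) by (simp add: valid_def)
lemma vSe: "pdCG p \<tau> G \<Longrightarrow> okS (tau_e \<tau>) (Se G) (edges G)" using L1(1) by (simp add: valid_def)
lemma vE: "pdCG p \<tau> G \<Longrightarrow> edges G \<subseteq> F_V p" using L1(1) by (simp add: valid_def)

lemma LL_eq: "pdCG p \<tau> G \<Longrightarrow> LL q G = Sv G \<inter> {1..q}"
  by (auto simp: LL_def Sv_def sg_def)

lemma EE_eq: assumes "pdCG p \<tau> G" shows "EE p \<tau> G = EEt p \<tau> (edges G) (Se G)"
proof -
  have EV: "edges G \<subseteq> F_V p" using vE[OF assms] .
  have "e \<in> tau_e \<tau> ` (edges G \<inter> F_R p \<tau>) \<longleftrightarrow> tau_e \<tau> e \<in> edges G" if e: "e \<in> edges G" "e \<in> F_L p \<tau>" for e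
  proof
    assume "e \<in> tau_e \<tau> ` (edges G \<inter> F_R p \<tau>)"
    then obtain f where f: "f \<in> edges G" "e = tau_e \<tau> f" by blast
    then have "tau_e \<tau> e = f" using te_inv EV by blast
    then show "tau_e \<tau> e \<in> edges G" using f by simp
  next
    assume a: "tau_e \<tau> e \<in> edges G"
    have "tau_e \<tau> e \<in> F_R p \<tau>" using FL_FR e(2) .
    moreover have "tau_e \<tau> (tau_e \<tau> e) = e" using te_inv EV e(1) by blast
    ultimately show "e \<in> tau_e \<tau> ` (edges G \<inter> F_R p \<tau>)" using a by (metis IntI imageI)
  qed
  then show ?thesis unfolding EE_def EEt_def Se_def sg_def by blast
qed

lemma Sv_LL: assumes "pdCG p \<tau> G" shows "Sv G = {i \<in> Vset p. i \<in> LL q G \<or> \<tau> i \<in> LL q G}"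
proof -
  have o: "okS \<tau> (Sv G) (Vset p)" using vSv[OF assms] .
  have sub: "Sv G \<subseteq> Vset p" and cl: "\<And>i. i \<in> Sv G \<Longrightarrow> \<tau> i \<in> Sv G"
    using o tV unfolding okS_def by blast+
  show ?thesis
  proof (intro set_eqI iffI)
    fix i assume i: "i \<in> Sv G"
    then have iv: "i \<in> Vset p" using sub by blast
    have "i \<in> LL q G \<or> \<tau> i \<in> LL q G"
    proof (cases "i \<le> q")
      case True then show ?thesis using i iv by (simp add: LL_eq[OF assms] Vset_def)
    next
      case False
      then have "\<tau> i \<le> q" using LRb iv by simp
      moreover have "\<tau> i \<in> Vset p" using tV iv by blast
      ultimately show ?thesis using cl[OF i] by (simp add: LL_eq[OF assms] Vset_def)
    qed
    then show "i \<in> {i \<in> Vset p. i \<in> LL q G \<or> \<tau> i \<in> LL q G}" using iv by simp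
  next
    fix i assume "i \<in> {i \<in> Vset p. i \<in> LL q G \<or> \<tau> i \<in> LL q G}"
    then have i: "i \<in> Vset p" "i \<in> Sv G \<or> \<tau> i \<in> Sv G" by (auto simp: LL_eq[OF assms])
    then show "i \<in> Sv G" using cl tt by metis
  qed
qed

lemma Se_EE: assumes "pdCG p \<tau> G"
  shows "Se G = {e \<in> edges G. tau_e \<tau> e = e \<or> tau_e \<tau> e \<notin> edges G \<or> e \<in> EE p \<tau> G \<or> tau_e \<tau> e \<in> EE p \<tau> G}"
proof -
  have o: "okS (tau_e \<tau>) (Se G) (edges G)" using vSe[OF assms] .
  have EV: "edges G \<subseteq> F_V p" using vE[OF assms] .
  have sub: "Se G \<subseteq> edges G" and cl: "\<And>e. e \<in> Se G \<Longrightarrow> tau_e \<tau> e \<in> edges G \<Longrightarrow> tau_e \<tau> e \<in> Se G"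
    and c2: "\<And>e. e \<in> edges G \<Longrightarrow> tau_e \<tau> e = e \<or> tau_e \<tau> e \<notin> edges G \<Longrightarrow> e \<in> Se G"
    using o unfolding okS_def by blast+
  note EEe = EE_eq[OF assms]
  show ?thesis
  proof (intro set_eqI iffI)
    fix e assume e: "e \<in> Se G"
    then have eE: "e \<in> edges G" using sub by blast
    then have eF: "e \<in> F_V p" using EV by blast
    have "tau_e \<tau> e = e \<or> tau_e \<tau> e \<notin> edges G \<or> e \<in> EE p \<tau> G \<or> tau_e \<tau> e \<in> EE p \<tau> G"
    proof (cases "tau_e \<tau> e = e \<or> tau_e \<tau> e \<notin> edges G")
      case True then show ?thesis by blast
    next
      case False
      then have ne: "tau_e \<tau> e \<noteq> e" and te: "tau_e \<tau> e \<in> edges G" by auto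
      have ts: "tau_e \<tau> e \<in> Se G" using cl e te by blast
      have ii: "tau_e \<tau> (tau_e \<tau> e) = e" using te_inv eF by blast
      from FL_or[OF eF ne] show ?thesis
        using e eE te ts ii unfolding EEe EEt_def by auto
    qed
    then show "e \<in> {e \<in> edges G. tau_e \<tau> e = e \<or> tau_e \<tau> e \<notin> edges G \<or> e \<in> EE p \<tau> G \<or> tau_e \<tau> e \<in> EE p \<tau> G}"
      using eE by blast
  next
    fix e assume "e \<in> {e \<in> edges G. tau_e \<tau> e = e \<or> tau_e \<tau> e \<notin> edges G \<or> e \<in> EE p \<tau> G \<or> tau_e \<tau> e \<in> EE p \<tau> G}"
    then have e: "e \<in> edges G" "tau_e \<tau> e = e \<or> tau_e \<tau> e \<notin> edges G \<or> e \<in> EE p \<tau> G \<or> tau_e \<tau> e \<in> EE p \<tau> G"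
      by auto
    have ii: "tau_e \<tau> (tau_e \<tau> e) = e" using te_inv EV e(1) by blast
    show "e \<in> Se G"
    proof (cases "tau_e \<tau> e = e \<or> tau_e \<tau> e \<notin> edges G")
      case True then show ?thesis using c2 e(1) by blast
    next
      case False
      then have "e \<in> EE p \<tau> G \<or> tau_e \<tau> e \<in> EE p \<tau> G" using e(2) by blast
      then have "e \<in> Se G \<or> tau_e \<tau> e \<in> Se G" unfolding EEe EEt_def by blast
      then show ?thesis using cl[of "tau_e \<tau> e"] ii e(1) by auto
    qed
  qed
qed

lemma quad_inj:
  assumes "pdCG p \<tau> F" "pdCG p \<tau> H" "quad p q \<tau> F = quad p q \<tau> H"
  shows "F = H"
proof -
  have q: "edges F = edges H" "LL q F = LL q H" "EE p \<tau> F = EE p \<tau> H" using assms(3) by (auto simp: quad_def)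
  have "Sv F = Sv H" using Sv_LL[OF assms(1)] Sv_LL[OF assms(2)] q by simp
  moreover have "Se F = Se H" using Se_EE[OF assms(1)] Se_EE[OF assms(2)] q by simp
  ultimately show ?thesis using triple_eq[OF assms(1,2)] q by blast
qed

end


context pd begin

lemma between:
  assumes c: "covered_s p \<tau> H G" and v: "valid p \<tau> A E S"
    and s: "Sv H \<subseteq> A" "A \<subseteq> Sv G" "edges H \<subseteq> E" "E \<subseteq> edges G" "Se H \<subseteq> S" "S \<subseteq> Se G"
    and ne: "(A, E, S) \<noteq> (Sv G, edges G, Se G)"
  shows "Sv H = A \<and> edges H = E \<and> Se H = S"
proof -
  have H: "pdCG p \<tau> H" and G: "pdCG p \<tau> G" and no: "\<not> (\<exists>F. pdCG p \<tau> F \<and> model_less H F \<and> model_less F G)"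
    using c by (auto simp: covered_s_def)
  define F where "F = mkG p \<tau> A E S"
  note f = L3[OF v, folded F_def]
  have "model_le H F" using L4[OF H f(1)] s f by simp
  moreover have "model_le F G" using L4[OF f(1) G] s f by simp
  moreover have "F \<noteq> G" using ne f by auto
  ultimately have "H = F" using no f(1) unfolding model_less_def by blast
  then show ?thesis using f by simp
qed

lemma cover_class:
  assumes c: "covered_s p \<tau> H G"
  shows "(\<exists>i\<in>Sv G. Sv H = Sv G - {i, \<tau> i} \<and> edges H = edges G \<and> Se H = Se G) \<or>
    (\<exists>x\<in>Se G. Sv H = Sv G \<and> edges H = edges G - {x} \<and> Se H = Se G - {x}) \<or>
    (\<exists>x\<in>edges G - Se G. Sv H = Sv G \<and> edges H = edges G - {x, tau_e \<tau> x} \<and> Se H = Se G) \<or>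
    (\<exists>x\<in>Se G. tau_e \<tau> x \<in> Se G \<and> tau_e \<tau> x \<noteq> x \<and> Sv H = Sv G \<and> edges H = edges G \<and> Se H = Se G - {x, tau_e \<tau> x})"
proof -
  have H: "pdCG p \<tau> H" and G: "pdCG p \<tau> G" and ml: "model_less H G"
    using c by (auto simp: covered_s_def)
  have sub: "Sv H \<subseteq> Sv G" "edges H \<subseteq> edges G" "Se H \<subseteq> Se G" using ml L4[OF H G] by (auto simp: model_less_def)
  have neq: "H \<noteq> G" using ml by (simp add: model_less_def)
  have gv: "Sv G \<subseteq> Vset p" "\<And>i. i \<in> Sv G \<Longrightarrow> \<tau> i \<in> Sv G" using vSv[OF G] tV unfolding okS_def by blast+
  have hv: "\<And>i. i \<in> Sv H \<Longrightarrow> \<tau> i \<in> Sv H" using vSv[OF H] tV unfolding okS_def by blast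
  have EG: "edges G \<subseteq> F_V p" using vE[OF G] .
  have inv: "\<And>e. e \<in> edges G \<Longrightarrow> tau_e \<tau> (tau_e \<tau> e) = e" using te_inv EG by blast
  have gs: "Se G \<subseteq> edges G" "\<And>e. e \<in> Se G \<Longrightarrow> tau_e \<tau> e \<in> edges G \<Longrightarrow> tau_e \<tau> e \<in> Se G"
    "\<And>e. e \<in> edges G \<Longrightarrow> tau_e \<tau> e = e \<or> tau_e \<tau> e \<notin> edges G \<Longrightarrow> e \<in> Se G"
    using vSe[OF G] unfolding okS_def by blast+
  have hs: "Se H \<subseteq> edges H" "\<And>e. e \<in> Se H \<Longrightarrow> tau_e \<tau> e \<in> edges H \<Longrightarrow> tau_e \<tau> e \<in> Se H"
    "\<And>e. e \<in> edges H \<Longrightarrow> tau_e \<tau> e = e \<or> tau_e \<tau> e \<notin> edges H \<Longrightarrow> e \<in> Se H"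
    using vSe[OF H] unfolding okS_def by blast+
  show ?thesis
  proof (cases "Sv H = Sv G")
    case False
    then obtain i where i: "i \<in> Sv G" "i \<notin> Sv H" using sub by blast
    have iv: "i \<in> Vset p" "\<tau> (\<tau> i) = i" using i gv tt by auto
    define A where "A = Sv G - {i, \<tau> i}"
    have "okS \<tau> A (Vset p)" unfolding okS_def
    proof (intro conjI ballI impI)
      show "A \<subseteq> Vset p" using gv unfolding A_def by blast
    next
      fix x assume x: "x \<in> A" "\<tau> x \<in> Vset p"
      then have "x \<in> Sv G" "x \<noteq> i" "x \<noteq> \<tau> i" unfolding A_def by auto
      moreover have "\<tau> (\<tau> x) = x" using tt gv \<open>x \<in> Sv G\<close> by blast
      ultimately show "\<tau> x \<in> A" using gv(2) iv unfolding A_def by auto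
    next
      fix x assume "x \<in> Vset p" "\<tau> x = x \<or> \<tau> x \<notin> Vset p"
      then show "x \<in> A" using tne tV by blast
    qed
    then have va: "valid p \<tau> A (edges G) (Se G)" using L1(1)[OF G] by (simp add: valid_def)
    have "\<tau> i \<notin> Sv H" using hv i iv by metis
    then have "Sv H \<subseteq> A" using sub i unfolding A_def by blast
    then have "Sv H = A \<and> edges H = edges G \<and> Se H = Se G"
      using between[OF c va] sub i unfolding A_def by auto
    then show ?thesis using i unfolding A_def by blast
  next
    case sv: True
    show ?thesis
    proof (cases "edges H = edges G")
      case False
      then obtain x where x: "x \<in> edges G" "x \<notin> edges H" using sub by blast
      have xi: "tau_e \<tau> (tau_e \<tau> x) = x" using inv x by blast
      show ?thesis
      proof (cases "x \<in> Se G")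
        case True
        have "okS (tau_e \<tau>) (Se G - {x}) (edges G - {x})" unfolding okS_def
        proof (intro conjI ballI impI)
          show "Se G - {x} \<subseteq> edges G - {x}" using gs by blast
        next
          fix y assume "y \<in> Se G - {x}" "tau_e \<tau> y \<in> edges G - {x}"
          then show "tau_e \<tau> y \<in> Se G - {x}" using gs(2)[of y] by blast
        next
          fix y assume y: "y \<in> edges G - {x}" "tau_e \<tau> y = y \<or> tau_e \<tau> y \<notin> edges G - {x}"
          show "y \<in> Se G - {x}"
          proof (cases "tau_e \<tau> y = x")
            case True
            have "y \<in> edges G" using y(1) by blast
            then have "tau_e \<tau> (tau_e \<tau> y) = y" by (rule inv)
            then have "tau_e \<tau> x = y" using True by simp
            then have "y \<in> Se G" using gs(2)[OF \<open>x \<in> Se G\<close>] \<open>y \<in> edges G\<close> by simp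
            then show ?thesis using y(1) by blast
          next
            case False
            then show ?thesis using gs(3) y by blast
          qed
        qed
        then have va: "valid p \<tau> (Sv G) (edges G - {x}) (Se G - {x})" using L1(1)[OF G] by (auto simp: valid_def)
        have "Sv H = Sv G \<and> edges H = edges G - {x} \<and> Se H = Se G - {x}"
          using between[OF c va] sub sv x hs(1) by auto
        then show ?thesis using True by blast
      next
        case False
        have tx: "tau_e \<tau> x \<in> edges G" "tau_e \<tau> x \<noteq> x" using gs(3)[OF x(1)] False by blast+
        have txs: "tau_e \<tau> x \<notin> Se G"
        proof
          assume "tau_e \<tau> x \<in> Se G"
          then have "tau_e \<tau> (tau_e \<tau> x) \<in> Se G" using gs(2)[of "tau_e \<tau> x"] xi x(1) by simp
          then show False using xi False by simp
        qed
        have "okS (tau_e \<tau>) (Se G) (edges G - {x, tau_e \<tau> x})" unfolding okS_def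
        proof (intro conjI ballI impI)
          show "Se G \<subseteq> edges G - {x, tau_e \<tau> x}" using gs(1) False txs by blast
        next
          fix y assume "y \<in> Se G" "tau_e \<tau> y \<in> edges G - {x, tau_e \<tau> x}"
          then show "tau_e \<tau> y \<in> Se G" using gs(2)[of y] by blast
        next
          fix y assume y: "y \<in> edges G - {x, tau_e \<tau> x}" "tau_e \<tau> y = y \<or> tau_e \<tau> y \<notin> edges G - {x, tau_e \<tau> x}"
          have yE: "y \<in> edges G" using y(1) by blast
          have yi: "tau_e \<tau> (tau_e \<tau> y) = y" using inv[OF yE] .
          have "tau_e \<tau> y \<noteq> x"
          proof
            assume "tau_e \<tau> y = x"
            then have "tau_e \<tau> x = y" using yi by simp
            then show False using y(1) by blast
          qed
          moreover have "tau_e \<tau> y \<noteq> tau_e \<tau> x"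
          proof
            assume "tau_e \<tau> y = tau_e \<tau> x"
            then have "tau_e \<tau> (tau_e \<tau> y) = tau_e \<tau> (tau_e \<tau> x)" by simp
            then have "y = x" using yi xi by simp
            then show False using y(1) by blast
          qed
          ultimately have "tau_e \<tau> y = y \<or> tau_e \<tau> y \<notin> edges G" using y(2) by blast
          then show "y \<in> Se G" using gs(3)[OF yE] by blast
        qed
        then have va: "valid p \<tau> (Sv G) (edges G - {x, tau_e \<tau> x}) (Se G)" using L1(1)[OF G] by (auto simp: valid_def)
        have "tau_e \<tau> x \<notin> edges H"
        proof
          assume a: "tau_e \<tau> x \<in> edges H"
          have "tau_e \<tau> (tau_e \<tau> x) \<notin> edges H" using xi x(2) by simp
          then have "tau_e \<tau> x \<in> Se H" using hs(3)[OF a] by blast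
          then show False using sub(3) txs by blast
        qed
        then have "edges H \<subseteq> edges G - {x, tau_e \<tau> x}" using sub(2) x(2) by blast
        moreover have "Se H \<subseteq> Se G" using sub by blast
        ultimately have "Sv H = Sv G \<and> edges H = edges G - {x, tau_e \<tau> x} \<and> Se H = Se G"
          using between[OF c va] sv x(1) by blast
        then show ?thesis using x False by blast
      qed
    next
      case ed: True
      have "Se H \<noteq> Se G" using neq triple_eq[OF H G] sv ed by blast
      then obtain x where x: "x \<in> Se G" "x \<notin> Se H" using sub by blast
      have xE: "x \<in> edges G" using x gs(1) by blast
      have xi: "tau_e \<tau> (tau_e \<tau> x) = x" using inv[OF xE] .
      have xH: "x \<in> edges H" using xE ed by simp
      have tx: "tau_e \<tau> x \<in> edges G" "tau_e \<tau> x \<noteq> x" using hs(3)[OF xH] x(2) ed by blast+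
      have txh: "tau_e \<tau> x \<notin> Se H"
      proof
        assume "tau_e \<tau> x \<in> Se H"
        then have "tau_e \<tau> (tau_e \<tau> x) \<in> Se H" using hs(2)[of "tau_e \<tau> x"] xi xH by simp
        then show False using xi x(2) by simp
      qed
      have txs: "tau_e \<tau> x \<in> Se G" using gs(2)[OF x(1) tx(1)] .
      have "okS (tau_e \<tau>) (Se G - {x, tau_e \<tau> x}) (edges G)" unfolding okS_def
      proof (intro conjI ballI impI)
        show "Se G - {x, tau_e \<tau> x} \<subseteq> edges G" using gs(1) by blast
      next
        fix y assume y: "y \<in> Se G - {x, tau_e \<tau> x}" "tau_e \<tau> y \<in> edges G"
        have yE: "y \<in> edges G" using y gs(1) by blast
        have yi: "tau_e \<tau> (tau_e \<tau> y) = y" using inv[OF yE] .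
        have "tau_e \<tau> y \<noteq> x"
        proof
          assume "tau_e \<tau> y = x"
          then have "tau_e \<tau> x = y" using yi by simp
          then show False using y(1) by blast
        qed
        moreover have "tau_e \<tau> y \<noteq> tau_e \<tau> x"
        proof
          assume "tau_e \<tau> y = tau_e \<tau> x"
          then have "tau_e \<tau> (tau_e \<tau> y) = tau_e \<tau> (tau_e \<tau> x)" by simp
          then have "y = x" using yi xi by simp
          then show False using y(1) by blast
        qed
        moreover have "tau_e \<tau> y \<in> Se G" using gs(2)[of y] y by blast
        ultimately show "tau_e \<tau> y \<in> Se G - {x, tau_e \<tau> x}" by blast
      next
        fix y assume y: "y \<in> edges G" "tau_e \<tau> y = y \<or> tau_e \<tau> y \<notin> edges G"
        have "y \<noteq> x" using y tx by blast
        moreover have "y \<noteq> tau_e \<tau> x"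
        proof
          assume "y = tau_e \<tau> x"
          then show False using y xi xE tx by simp
        qed
        moreover have "y \<in> Se G" using gs(3)[OF y(1) y(2)] .
        ultimately show "y \<in> Se G - {x, tau_e \<tau> x}" by blast
      qed
      then have va: "valid p \<tau> (Sv G) (edges G) (Se G - {x, tau_e \<tau> x})" using L1(1)[OF G] by (auto simp: valid_def)
      have "Se H \<subseteq> Se G - {x, tau_e \<tau> x}" using sub(3) x(2) txh by blast
      then have "Sv H = Sv G \<and> edges H = edges G \<and> Se H = Se G - {x, tau_e \<tau> x}"
        using between[OF c va] sv ed x(1) by blast
      then show ?thesis using x txs tx by blast
    qed
  qed
qed

end


context pd begin

lemma te_injF: "f \<in> F_V p \<Longrightarrow> g \<in> F_V p \<Longrightarrow> tau_e \<tau> f = tau_e \<tau> g \<Longrightarrow> f = g"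
  by (metis te_inv)

lemma FL_not_twin: "e \<in> F_L p \<tau> \<Longrightarrow> tau_e \<tau> e \<notin> F_L p \<tau>"
  using FL_FR FLR_disj by blast

lemma tle_triple:
  assumes H1: "pdCG p \<tau> H1" and H2: "pdCG p \<tau> H2" and le: "twin_le p q \<tau> H1 H2"
  shows "edges H1 \<subseteq> edges H2" "Sv H1 \<subseteq> Sv H2"
    "EEt p \<tau> (edges H1) (Se H1) \<subseteq> EEt p \<tau> (edges H2) (Se H2)"
proof -
  show "edges H1 \<subseteq> edges H2" using le by (simp add: twin_le_def)
  have "LL q H1 \<subseteq> LL q H2" using le by (simp add: twin_le_def)
  then show "Sv H1 \<subseteq> Sv H2" unfolding Sv_LL[OF H1] Sv_LL[OF H2] by blast
  show "EEt p \<tau> (edges H1) (Se H1) \<subseteq> EEt p \<tau> (edges H2) (Se H2)"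
    using le unfolding twin_le_def EE_eq[OF H1] EE_eq[OF H2] by blast
qed

lemma main_le:
  assumes c1: "covered_s p \<tau> H1 G" and c2: "covered_s p \<tau> H2 G" and ne: "H1 \<noteq> H2"
    and le: "twin_le p q \<tau> H1 H2"
  shows "twin_config p q \<tau> G H1 H2"
proof -
  have H1: "pdCG p \<tau> H1" and H2: "pdCG p \<tau> H2" and G: "pdCG p \<tau> G"
    using c1 c2 by (auto simp: covered_s_def)
  note l = tle_triple[OF H1 H2 le]
  have gv: "Sv G \<subseteq> Vset p" "\<And>i. i \<in> Sv G \<Longrightarrow> \<tau> i \<in> Sv G" using vSv[OF G] tV unfolding okS_def by blast+
  have EG: "edges G \<subseteq> F_V p" using vE[OF G] .
  have inv: "\<And>e. e \<in> edges G \<Longrightarrow> tau_e \<tau> (tau_e \<tau> e) = e" using te_inv EG by blast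
  have gs: "Se G \<subseteq> edges G" "\<And>e. e \<in> Se G \<Longrightarrow> tau_e \<tau> e \<in> edges G \<Longrightarrow> tau_e \<tau> e \<in> Se G"
    "\<And>e. e \<in> edges G \<Longrightarrow> tau_e \<tau> e = e \<or> tau_e \<tau> e \<notin> edges G \<Longrightarrow> e \<in> Se G"
    using vSe[OF G] unfolding okS_def by blast+
  have nsS: "tau_e \<tau> y \<notin> Se G" if "y \<in> edges G" "y \<notin> Se G" for y
  proof
    assume "tau_e \<tau> y \<in> Se G"
    moreover have "tau_e \<tau> (tau_e \<tau> y) = y" using inv[OF that(1)] .
    ultimately have "y \<in> Se G" using gs(2)[of "tau_e \<tau> y"] that(1) by simp
    then show False using that(2) by simp
  qed
  have eqH: "H1 = H2" if "Sv H1 = Sv H2" "edges H1 = edges H2" "Se H1 = Se H2"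
    using triple_eq[OF H1 H2] that .
  note k1 = cover_class[OF c1] and k2 = cover_class[OF c2]
  from k2 show ?thesis
  proof (elim disjE bexE conjE)
    fix i assume i: "i \<in> Sv G" and s2: "Sv H2 = Sv G - {i, \<tau> i}" "edges H2 = edges G" "Se H2 = Se G"
    have ti: "\<tau> (\<tau> i) = i" using tt gv i by blast
    from k1 show ?thesis
    proof (elim disjE bexE conjE)
      fix j assume j: "j \<in> Sv G" and s1: "Sv H1 = Sv G - {j, \<tau> j}" "edges H1 = edges G" "Se H1 = Se G"
      have tj: "\<tau> (\<tau> j) = j" using tt gv j by blast
      have "i \<in> {j, \<tau> j}" using l(2) s1 s2 i by blast
      then have "{i, \<tau> i} = {j, \<tau> j}" using tj by auto
      then have "H1 = H2" using eqH s1 s2 by simp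
      then show ?thesis using ne by simp
    qed (use l(2) s2 i in blast)+
  next
    fix x assume x: "x \<in> Se G" and s2: "Sv H2 = Sv G" "edges H2 = edges G - {x}" "Se H2 = Se G - {x}"
    have xE: "x \<in> edges G" using x gs(1) by blast
    from k1 show ?thesis
    proof (elim disjE bexE conjE)
      fix y assume y: "y \<in> Se G" and s1: "Sv H1 = Sv G" "edges H1 = edges G - {y}" "Se H1 = Se G - {y}"
      have "x = y" using l(1) s1 s2 xE by blast
      then show ?thesis using eqH s1 s2 ne by simp
    next
      fix y assume y: "y \<in> edges G - Se G" and s1: "Sv H1 = Sv G" "edges H1 = edges G - {y, tau_e \<tau> y}" "Se H1 = Se G"
      have "x \<in> {y, tau_e \<tau> y}" using l(1) s1 s2 xE by blast
      moreover have "tau_e \<tau> y \<notin> Se G" using nsS y by blast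
      ultimately show ?thesis using x y by blast
    qed (use l(1) s2 xE in blast)+
  next
    fix x assume x: "x \<in> edges G - Se G" and s2: "Sv H2 = Sv G" "edges H2 = edges G - {x, tau_e \<tau> x}" "Se H2 = Se G"
    have xi: "tau_e \<tau> (tau_e \<tau> x) = x" using inv x by blast
    from k1 show ?thesis
    proof (elim disjE bexE conjE)
      fix y assume y: "y \<in> Se G" and s1: "Sv H1 = Sv G" "edges H1 = edges G - {y}" "Se H1 = Se G - {y}"
      have "x = y" using l(1) s1 s2 x by blast
      then show ?thesis using x y by blast
    next
      fix y assume y: "y \<in> edges G - Se G" and s1: "Sv H1 = Sv G" "edges H1 = edges G - {y, tau_e \<tau> y}" "Se H1 = Se G"
      have yi: "tau_e \<tau> (tau_e \<tau> y) = y" using inv y by blast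
      have "x \<in> {y, tau_e \<tau> y}" using l(1) s1 s2 x by blast
      then have "{x, tau_e \<tau> x} = {y, tau_e \<tau> y}" using yi by auto
      then show ?thesis using eqH s1 s2 ne by simp
    qed (use l(1) s2 x in blast)+
  next
    fix x assume x: "x \<in> Se G" "tau_e \<tau> x \<in> Se G" "tau_e \<tau> x \<noteq> x"
      and s2: "Sv H2 = Sv G" "edges H2 = edges G" "Se H2 = Se G - {x, tau_e \<tau> x}"
    have xE: "x \<in> edges G" "tau_e \<tau> x \<in> edges G" using x gs(1) by blast+
    have xi: "tau_e \<tau> (tau_e \<tau> x) = x" using inv xE by blast
    obtain e where e: "e \<in> F_L p \<tau>" "{e, tau_e \<tau> e} = {x, tau_e \<tau> x}"
    proof -
      have "x \<in> F_L p \<tau> \<or> tau_e \<tau> x \<in> F_L p \<tau>" using FL_or[of x] xE EG x(3) by blast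
      then show ?thesis
      proof
        assume "x \<in> F_L p \<tau>" then show ?thesis using that by blast
      next
        assume "tau_e \<tau> x \<in> F_L p \<tau>" then show ?thesis using that[of "tau_e \<tau> x"] xi by auto
      qed
    qed
    have "e \<in> {e, tau_e \<tau> e}" "tau_e \<tau> e \<in> {e, tau_e \<tau> e}" by simp_all
    then have ein: "e \<in> {x, tau_e \<tau> x}" "tau_e \<tau> e \<in> {x, tau_e \<tau> x}" unfolding e(2) .
    have eS: "e \<in> Se G" "tau_e \<tau> e \<in> Se G" using ein x(1,2) by auto
    have eE: "e \<in> edges G" "tau_e \<tau> e \<in> edges G" using eS gs(1) by blast+
    have ei: "tau_e \<tau> (tau_e \<tau> e) = e" using inv eE by blast
    have teF: "tau_e \<tau> e \<notin> F_L p \<tau>" using FL_not_twin e(1) .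
    have eEE: "e \<in> EEt p \<tau> (edges G) (Se G)" using e(1) eE eS by (simp add: EEt_def)
    have EE2: "EEt p \<tau> (edges H2) (Se H2) = EEt p \<tau> (edges G) (Se G) - {e}"
      unfolding s2 using e(2) teF by (auto simp: EEt_def)
    have eN: "e \<notin> EEt p \<tau> (edges H1) (Se H1)" using l(3) EE2 by blast
    from k1 show ?thesis
    proof (elim disjE bexE conjE)
      fix j assume s1: "Sv H1 = Sv G - {j, \<tau> j}" "edges H1 = edges G" "Se H1 = Se G"
      show ?thesis using eN eEE s1 by simp
    next
      fix y assume y: "y \<in> edges G - Se G" and s1: "Sv H1 = Sv G" "edges H1 = edges G - {y, tau_e \<tau> y}" "Se H1 = Se G"
      have "tau_e \<tau> y \<notin> Se G" using nsS y by blast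
      then have "e \<in> EEt p \<tau> (edges H1) (Se H1)" using eEE eS y unfolding s1 EEt_def by auto
      then show ?thesis using eN by simp
    next
      fix y assume y: "y \<in> Se G" "tau_e \<tau> y \<in> Se G" "tau_e \<tau> y \<noteq> y"
        and s1: "Sv H1 = Sv G" "edges H1 = edges G" "Se H1 = Se G - {y, tau_e \<tau> y}"
      have yi: "tau_e \<tau> (tau_e \<tau> y) = y" using inv y gs(1) by blast
      have "e \<in> {y, tau_e \<tau> y}" using eN eEE unfolding s1 EEt_def by auto
      then have "{e, tau_e \<tau> e} = {y, tau_e \<tau> y}" using yi by auto
      then show ?thesis using eqH s1 s2 e(2) ne by simp
    next
      fix y assume y: "y \<in> Se G" and s1: "Sv H1 = Sv G" "edges H1 = edges G - {y}" "Se H1 = Se G - {y}"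
      have yE: "y \<in> edges G" using y gs(1) by blast
      have "y = e \<or> y = tau_e \<tau> e" using eN eEE unfolding s1 EEt_def by auto
      have EEG: "EE p \<tau> G = EEt p \<tau> (edges G) (Se G)" using EE_eq[OF G] .
      have q2: "quad p q \<tau> H2 = (edges G, LL q G, EE p \<tau> G - {e})"
        unfolding quad_def EE_eq[OF H2] EE2 LL_eq[OF H2] LL_eq[OF G] EEG using s2 by simp
      have EE1: "EEt p \<tau> (edges H1) (Se H1) = EEt p \<tau> (edges G) (Se G) - {e}"
      proof (rule set_eqI)
        fix f
        show "f \<in> EEt p \<tau> (edges H1) (Se H1) \<longleftrightarrow> f \<in> EEt p \<tau> (edges G) (Se G) - {e}"
        proof (cases "f \<in> edges G")
          case True
          have "tau_e \<tau> f = tau_e \<tau> e \<longleftrightarrow> f = e" using inv True eE by metis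
          then show ?thesis using \<open>y = e \<or> y = tau_e \<tau> e\<close> teF e(1) FL_not_twin[of f] unfolding s1 EEt_def by auto
        next
          case False
          then show ?thesis unfolding s1 EEt_def by auto
        qed
      qed
      have q1: "quad p q \<tau> H1 = (edges G - {y}, LL q G, EE p \<tau> G - {e})"
        unfolding quad_def EE_eq[OF H1] EE1 LL_eq[OF H1] LL_eq[OF G] EEG using s1 by simp
      show ?thesis unfolding twin_config_def
        using eEE EEG q1 q2 \<open>y = e \<or> y = tau_e \<tau> e\<close> by auto
    qed
  qed
qed

end


context pd begin

lemma cfg_le: "twin_config p q \<tau> G H1 H2 \<Longrightarrow> twin_le p q \<tau> H1 H2"
  unfolding twin_config_def twin_le_def quad_def by auto

lemma cfg_cov:
  assumes H1: "pdCG p \<tau> H1" and H2: "pdCG p \<tau> H2" and ne: "H1 \<noteq> H2"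
    and cf: "twin_config p q \<tau> G H1 H2"
  shows "covered_t p q \<tau> H1 H2"
proof -
  obtain e z where q2: "quad p q \<tau> H2 = (edges G, LL q G, EE p \<tau> G - {e})"
    and q1: "quad p q \<tau> H1 = (edges G - {z}, LL q G, EE p \<tau> G - {e})"
    using cf unfolding twin_config_def by blast
  have "\<not> (twin_less p q \<tau> H1 F \<and> twin_less p q \<tau> F H2)" if F: "pdCG p \<tau> F" for F
  proof
    assume a: "twin_less p q \<tau> H1 F \<and> twin_less p q \<tau> F H2"
    then have le: "twin_le p q \<tau> H1 F" "twin_le p q \<tau> F H2" "F \<noteq> H1" "F \<noteq> H2"
      by (auto simp: twin_less_def)
    have e1: "edges H1 = edges G - {z}" "LL q H1 = LL q G" "EE p \<tau> H1 = EE p \<tau> G - {e}"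
      using q1 by (auto simp: quad_def)
    have e2: "edges H2 = edges G" "LL q H2 = LL q G" "EE p \<tau> H2 = EE p \<tau> G - {e}"
      using q2 by (auto simp: quad_def)
    have f: "edges G - {z} \<subseteq> edges F" "edges F \<subseteq> edges G" "LL q F = LL q G" "EE p \<tau> F = EE p \<tau> G - {e}"
      using le(1,2) e1 e2 unfolding twin_le_def by auto
    show False
    proof (cases "z \<in> edges F")
      case True
      then have "edges F = edges G" using f by blast
      then have "quad p q \<tau> F = quad p q \<tau> H2" using f q2 by (simp add: quad_def)
      then show False using quad_inj[OF F H2] le by simp
    next
      case False
      then have "edges F = edges G - {z}" using f by blast
      then have "quad p q \<tau> F = quad p q \<tau> H1" using f q1 by (simp add: quad_def)
      then show False using quad_inj[OF F H1] le by simp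
    qed
  qed
  then show ?thesis using H1 H2 ne cfg_le[OF cf] by (auto simp: covered_t_def twin_less_def)
qed

end

theorem corollary9:
  fixes p q :: nat and \<tau> :: "nat \<Rightarrow> nat" and G H1 H2 :: cgraph
  assumes "twin_pairing p \<tau>"
    and "\<tau> ` {1..q} = {q+1..p}"
    and "pdCG p \<tau> G" and "pdCG p \<tau> H1" and "pdCG p \<tau> H2"
    and "covered_s p \<tau> H1 G" and "covered_s p \<tau> H2 G"
    and "H1 \<noteq> H2"
  shows "(twin_le p q \<tau> H1 H2 \<longleftrightarrow> twin_config p q \<tau> G H1 H2)
     \<and> (twin_config p q \<tau> G H1 H2 \<longrightarrow> covered_t p q \<tau> H1 H2)
     \<and> (\<not> twin_config p q \<tau> G H1 H2 \<and> \<not> twin_config p q \<tau> G H2 H1 \<longrightarrow>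
          \<not> twin_le p q \<tau> H1 H2 \<and> \<not> twin_le p q \<tau> H2 H1)"
proof -
  interpret pd p q \<tau> using assms(1,2) by unfold_locales
  have a: "twin_le p q \<tau> H1 H2 \<Longrightarrow> twin_config p q \<tau> G H1 H2"
    using main_le[OF assms(6,7,8)] .
  have b: "twin_le p q \<tau> H2 H1 \<Longrightarrow> twin_config p q \<tau> G H2 H1"
    using main_le[OF assms(7,6)] assms(8) by metis
  show ?thesis using a b cfg_le cfg_cov[OF assms(4,5,8)] by blast
qed


end
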